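(* Let $p$ be a Fermat prime, i.e. a prime of the form $p = 2^{m}+1$ with $m$ a positive integer. Then for every positive integer $k$, \[ \sum_{i=1}^{K(p^k)} \phi^{i}(p^k) \;=\; \phi(p^k) + \phi(\phi(p^k)) + \phi(\phi(\phi(p^k))) + \cdots + \phi(2) \;=\; \frac{2}{p+1}\left[p^k(p-1) + 2\left(\frac{p-1}{2}\right)^k\right] - 1 . \]
   Context: $\phi$ denotes Euler's totient function: $\phi(n)$ is the number of integers $x$ with $1\le x\le n$ and $\gcd(x,n)=1$ (so $\phi(1)=\phi(2)=1$). For $i\ge 1$, $\phi^{i}$ denotes the $i$-fold iterate $\phi\circ\cdots\circ\phi$. For an integer $n\ge 2$, $K(n)$ denotes the least positive integer $j$ with $\phi^{j}(n)=1$; the sum $\phi(n)+\phi(\phi(n))+\cdots+\phi(2)$ means $\sum_{i=1}^{K(n)}\phi^i(n)$, i.e. the iteration is summed up to and including the first iterate equal to $1$ (which for $n\ge 3$ is the term $\phi(2)$). *)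

theory Defs
  imports "HOL-Number_Theory.Number_Theory"
begin

definition totient_K :: "nat \<Rightarrow> nat" where
  "totient_K n = (LEAST j. 0 < j \<and> (totient ^^ j) n = 1)"

end

theory Submission
  imports Defs
begin

lemma tot_pow2: "0 < e \<Longrightarrow> totient ((2::nat) ^ e) = 2 ^ (e - 1)"
  using totient_prime_power[of 2 e] by (cases e) auto

lemma iter_pow2: "j \<le> B \<Longrightarrow> (totient ^^ j) ((2::nat) ^ B) = 2 ^ (B - j)"
proof (induction j)
  case 0 then show ?case by simp
next
  case (Suc j)
  then have "(totient ^^ Suc j) (2 ^ B) = totient (2 ^ (B - j))" by simp
  also have "\<dots> = 2 ^ (B - j - 1)" using Suc.prems by (intro tot_pow2) auto
  also have "B - j - 1 = B - Suc j" by arith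
  finally show ?case .
qed

lemma iter_main:
  fixes p r k :: nat
  assumes pr: "prime p" and pe: "p = 2 * r + 1" and r: "r = 2 ^ (m - 1)"
  shows "1 \<le> i \<Longrightarrow> i \<le> k \<Longrightarrow> (totient ^^ i) (p ^ k) = p ^ (k - i) * (2 * r ^ i)"
proof (induction i)
  case 0 then show ?case by simp
next
  case (Suc i)
  show ?case
  proof (cases "i = 0")
    case True
    then show ?thesis using Suc.prems totient_prime_power[OF pr, of k] pe
      by (cases k) (auto simp: power_Suc)
  next
    case False
    have IH: "(totient ^^ i) (p ^ k) = p ^ (k - i) * (2 * r ^ i)" using Suc False by auto
    have cop: "coprime (p ^ (k - i)) (2 * r ^ i)"
    proof -
      have "coprime p 2" using pe by simp
      have "2 * r ^ i = 2 ^ (i * (m - 1) + 1)" using r by (simp add: power_mult[symmetric] mult.commute)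
      moreover have "coprime (p ^ (k - i)) (2 ^ (i * (m - 1) + 1))"
        using \<open>coprime p 2\<close> by simp
      ultimately show ?thesis by simp
    qed
    have e2: "2 * r ^ i = 2 ^ (i * (m - 1) + 1)" using r by (simp add: power_mult[symmetric] mult.commute)
    have "(totient ^^ Suc i) (p ^ k) = totient (p ^ (k - i)) * totient (2 * r ^ i)"
      using IH cop by (simp add: totient_mult_coprime)
    also have "totient (p ^ (k - i)) = p ^ (k - i - 1) * (2 * r)"
      using totient_prime_power[OF pr, of "k - i"] Suc.prems pe by auto
    also have "totient (2 * r ^ i) = r ^ i"
      unfolding e2 using tot_pow2[of "i * (m - 1) + 1"] e2 by simp
    also have "k - i - 1 = k - Suc i" by arith
    finally show ?thesis by (simp only: power_Suc mult_ac)
  qed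
qed

lemma geo:
  fixes p r :: real
  assumes "p = 2 * r + 1"
  shows "(r + 1) * (\<Sum>i = 1..k. p ^ (k - i) * r ^ i) = r * (p ^ k - r ^ k)"
proof (induction k)
  case 0 then show ?case by simp
next
  case (Suc k)
  have "(\<Sum>i = 1..Suc k. p ^ (Suc k - i) * r ^ i) = (\<Sum>i = 1..k. p ^ (Suc k - i) * r ^ i) + r ^ Suc k"
    by simp
  also have "(\<Sum>i = 1..k. p ^ (Suc k - i) * r ^ i) = p * (\<Sum>i = 1..k. p ^ (k - i) * r ^ i)"
    by (simp add: sum_distrib_left Suc_diff_le mult_ac)
  finally have "(r + 1) * (\<Sum>i = 1..Suc k. p ^ (Suc k - i) * r ^ i)
      = p * ((r + 1) * (\<Sum>i = 1..k. p ^ (k - i) * r ^ i)) + (r + 1) * r ^ Suc k"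
    by (simp add: algebra_simps)
  also have "\<dots> = p * (r * (p ^ k - r ^ k)) + (r + 1) * r ^ Suc k" using Suc.IH by simp
  also have "\<dots> = r * (p ^ Suc k - r ^ Suc k)" unfolding assms by (simp add: algebra_simps)
  finally show ?case .
qed

theorem theorem4p8:
  fixes p m k :: nat
  assumes "prime p" and "0 < m" and "p = 2 ^ m + 1" and "0 < k"
  shows "real (\<Sum>i = 1..totient_K (p ^ k). (totient ^^ i) (p ^ k))
         = 2 / (real p + 1) * (real p ^ k * (real p - 1) + 2 * ((real p - 1) / 2) ^ k) - 1"
proof -
  define r :: nat where "r = 2 ^ (m - 1)"
  have pe: "p = 2 * r + 1" using assms(2,3) unfolding r_def
    by (cases m) auto
  have r1: "r \<ge> 1" unfolding r_def by simp
  define B where "B = k * (m - 1) + 1"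
  have e2: "2 * r ^ k = 2 ^ B" unfolding B_def r_def by (simp add: power_mult[symmetric] mult.commute)
  have it: "\<And>i. 1 \<le> i \<Longrightarrow> i \<le> k \<Longrightarrow> (totient ^^ i) (p ^ k) = p ^ (k - i) * (2 * r ^ i)"
    using iter_main[OF assms(1) pe r_def] by blast
  have it2: "\<And>j. j \<le> B \<Longrightarrow> (totient ^^ (k + j)) (p ^ k) = 2 ^ (B - j)"
  proof -
    fix j assume "j \<le> B"
    have "(totient ^^ (k + j)) (p ^ k) = (totient ^^ j) ((totient ^^ k) (p ^ k))"
      by (simp add: funpow_add add.commute[of k j])
    also have "(totient ^^ k) (p ^ k) = 2 ^ B" using it[of k] assms(4) e2 by simp
    finally show "(totient ^^ (k + j)) (p ^ k) = 2 ^ (B - j)" using iter_pow2 \<open>j \<le> B\<close> by simp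
  qed
  have K: "totient_K (p ^ k) = k + B"
    unfolding totient_K_def
  proof (rule Least_equality)
    show "0 < k + B \<and> (totient ^^ (k + B)) (p ^ k) = 1" using it2[of B] assms(4) by simp
  next
    fix j assume j: "0 < j \<and> (totient ^^ j) (p ^ k) = 1"
    show "k + B \<le> j"
    proof (rule ccontr)
      assume "\<not> k + B \<le> j"
      show False
      proof (cases "j \<le> k")
        case True
        then have "(totient ^^ j) (p ^ k) = p ^ (k - j) * (2 * r ^ j)" using it j by auto
        moreover have "p ^ (k - j) * (2 * r ^ j) \<noteq> 1" using r1 pe by simp
        ultimately show False using j by simp
      next
        case False
        then obtain d where d: "j = k + d" "d < B" "d > 0" using \<open>\<not> k + B \<le> j\<close>
          by (metis add_less_cancel_left le_add_diff_inverse less_or_eq_imp_le not_le zero_less_diff)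
        then have "(totient ^^ j) (p ^ k) = 2 ^ (B - d)" using it2 by simp
        moreover have "(2::nat) ^ (B - d) \<noteq> 1" using d by simp
        ultimately show False using j by simp
      qed
    qed
  qed
  have split: "{1..k + B} = {1..k} \<union> {k + 1..k + B}" by auto
  have S: "(\<Sum>i = 1..k + B. (totient ^^ i) (p ^ k))
      = (\<Sum>i = 1..k. p ^ (k - i) * (2 * r ^ i)) + (\<Sum>i = k + 1..k + B. (totient ^^ i) (p ^ k))"
    unfolding split by (subst sum.union_disjoint) (auto intro!: sum.cong simp: it)
  have T: "(\<Sum>i = k + 1..k + B. (totient ^^ i) (p ^ k)) = (\<Sum>j = 1..B. 2 ^ (B - j))"
  proof -
    have "(\<Sum>i = k + 1..k + B. (totient ^^ i) (p ^ k)) = (\<Sum>j = 1..B. (totient ^^ (k + j)) (p ^ k))"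
      by (rule sum.reindex_bij_witness[of _ "\<lambda>j. k + j" "\<lambda>i. i - k"]) auto
    also have "\<dots> = (\<Sum>j = 1..B. 2 ^ (B - j))" by (rule sum.cong) (auto simp: it2)
    finally show ?thesis .
  qed
  have G: "(\<Sum>j = 1..B. (2::nat) ^ (B - j)) + 1 = 2 ^ B"
  proof -
    have "(\<Sum>j = 1..B. (2::nat) ^ (B - j)) = (\<Sum>j < B. 2 ^ j)"
      by (rule sum.reindex_bij_witness[of _ "\<lambda>j. B - j" "\<lambda>i. B - i"]) auto
    moreover have "(\<Sum>j < B. (2::nat) ^ j) = 2 ^ B - 1" using sum_power2[of B] by (simp add: atLeast0LessThan)
    moreover have "(2::nat) ^ B \<ge> 1" by simp
    ultimately show ?thesis by linarith
  qed
  define R where "R = real r"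
  have pR: "real p = 2 * R + 1" unfolding R_def using pe by simp
  have Rp: "(real p - 1) / 2 = R" using pR by simp
  have main: "real (\<Sum>i = 1..totient_K (p ^ k). (totient ^^ i) (p ^ k))
      = 2 * (\<Sum>i = 1..k. real p ^ (k - i) * R ^ i) + 2 * R ^ k - 1"
  proof -
    have "real (\<Sum>i = 1..totient_K (p ^ k). (totient ^^ i) (p ^ k))
        = real (\<Sum>i = 1..k. p ^ (k - i) * (2 * r ^ i)) + real (\<Sum>j = 1..B. 2 ^ (B - j))"
      unfolding K S T by simp
    also have "real (\<Sum>j = 1..B. (2::nat) ^ (B - j)) = 2 * R ^ k - 1"
    proof -
      have "real (\<Sum>j = 1..B. (2::nat) ^ (B - j)) + 1 = real (2 ^ B)" using G
        by (metis of_nat_1 of_nat_add)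
      also have "real ((2::nat) ^ B) = 2 * R ^ k" unfolding e2[symmetric] R_def by simp
      finally show ?thesis by simp
    qed
    also have "real (\<Sum>i = 1..k. p ^ (k - i) * (2 * r ^ i)) = 2 * (\<Sum>i = 1..k. real p ^ (k - i) * R ^ i)"
      unfolding R_def by (simp add: sum_distrib_left mult_ac)
    finally show ?thesis by simp
  qed
  have g: "(R + 1) * (\<Sum>i = 1..k. real p ^ (k - i) * R ^ i) = R * (real p ^ k - R ^ k)"
    by (rule geo[OF pR])
  have R0: "R + 1 > 0" unfolding R_def by simp
  show ?thesis unfolding main Rp using g R0 pR
    by (simp add: field_simps)
qed

end
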